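(* Let $0<q<1$, let $\mu,\nu\in\mathbb{R}$ and $\alpha,\beta\in\mathbb{C}$. Let $V$ be the vector space of formal (possibly infinite) linear combinations $\sum_{m\ge 0} c_m \xi_m$ of symbols $\xi_0,\xi_1,\xi_2,\dots$, and define linear operators $A_\pm$ on $V$ (acting termwise) by $$A_+\xi_n=-q^{-(n+1)/2}\,\xi_{n+1},\qquad A_-\xi_n=q^{n/2+1}\,\frac{1-q^{-n}}{1-q}\,\xi_{n-1}$$ (so $A_-\xi_0=0$). Let $$U^{(\mu,\nu)}(\alpha,\beta)=E_q^{(\mu)}\big((1-q)\alpha A_+\big)\,E_q^{(\nu)}\Big(\frac{\beta}{q}(1-q)A_-\Big),\qquad E_q^{(\mu)}(X)=\sum_{k=0}^\infty\frac{q^{\mu k^2}}{(q;q)_k}X^k .$$ Then for every $n\ge 0$ one has $U^{(\mu,\nu)}(\alpha,\beta)\,\xi_n=\sum_{m=0}^\infty U^{(\mu,\nu)}_{m,n}(\alpha,\beta)\,\xi_m$ with $$U^{(\mu,\nu)}_{m,n}(\alpha,\beta)=(-\beta)^{n-m}q^{(n-m)[(\nu+1/4)(n-m)-n/2-1/4]}\begin{bmatrix} n\\ m\end{bmatrix}_q\,\mathcal{P}_m^{(\mu,\nu)}\big(-(1-q)\alpha\beta;q^{n-m}\,\big|\,q\big)\quad\text{if } m\le n,$$ $$U^{(\mu,\nu)}_{m,n}(\alpha,\beta)=\frac{[-(1-q)\alpha]^{m-n}}{(q;q)_{m-n}}\,q^{(m-n)[(\mu-1/4)(m-n)-n/2-1/4]}\,\mathcal{P}_n^{(\nu,\mu)}\big(-(1-q)\alpha\beta;q^{m-n}\,\big|\,q\big)\quad\text{if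 } m\ge n .$$
   Context: $(a;q)_0=1$, $(a;q)_k=\prod_{j=0}^{k-1}(1-aq^j)$; $\begin{bmatrix} n\\ k\end{bmatrix}_q=\frac{(q;q)_n}{(q;q)_k(q;q)_{n-k}}$. For a nonnegative integer $\gamma$ and real $\mu,\nu$, the polynomial $\mathcal{P}_n^{(\mu,\nu)}$ is $$\mathcal{P}_n^{(\mu,\nu)}(x;q^\gamma|q)=\sum_{k=0}^n\frac{q^{k^2(\mu+\nu)+2\nu\gamma k}\,(q^{-n};q)_k}{(q;q)_k\,(q^{\gamma+1};q)_k}\,x^k .$$ Applying $U^{(\mu,\nu)}(\alpha,\beta)$ to $\xi_n$: the $A_-$ factor produces a finite combination, and the $A_+$ factor then produces a formal series in $V$ each of whose coefficients is a finite sum. The operators $A_\pm$ (together with $K\xi_n=q^{-n/2}\xi_n$) give a representation of the $q$-oscillator algebra $A_-A_+-q^{-1}A_+A_-=1$. *)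

theory Defs
  imports Complex_Main
begin

definition qpoch :: "real \<Rightarrow> real \<Rightarrow> nat \<Rightarrow> real" where
  "qpoch a q k = (\<Prod>j<k. 1 - a * q ^ j)"

definition qbinom :: "real \<Rightarrow> nat \<Rightarrow> nat \<Rightarrow> real" where
  "qbinom q n k = qpoch q q n / (qpoch q q k * qpoch q q (n - k))"

text \<open>The polynomial P_n^{(mu,nu)}(x; q^gamma | q).\<close>
definition Pcal :: "real \<Rightarrow> real \<Rightarrow> real \<Rightarrow> nat \<Rightarrow> nat \<Rightarrow> complex \<Rightarrow> complex" where
  "Pcal q \<mu> \<nu> n \<gamma> x = (\<Sum>k=0..n.
     complex_of_real (q powr (real k ^ 2 * (\<mu> + \<nu>) + 2 * \<nu> * real \<gamma> * real k)
       * qpoch (q powr (- real n)) q k / (qpoch q q k * qpoch (q ^ (\<gamma> + 1)) q k)) * x ^ k)"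

text \<open>Formal linear combinations sum_m c_m xi_m, represented by their coefficient sequences.\<close>
type_synonym fvec = "nat \<Rightarrow> complex"

definition xi :: "nat \<Rightarrow> fvec" where
  "xi n = (\<lambda>m. if m = n then 1 else 0)"

text \<open>A_+ xi_n = - q^{-(n+1)/2} xi_{n+1}, acting termwise.\<close>
definition Aplus :: "real \<Rightarrow> fvec \<Rightarrow> fvec" where
  "Aplus q c = (\<lambda>m. if m = 0 then 0
      else - complex_of_real (q powr (- real m / 2)) * c (m - 1))"

text \<open>A_- xi_n = q^{n/2+1} (1 - q^{-n})/(1-q) xi_{n-1}, acting termwise (A_- xi_0 = 0).\<close>
definition Aminus :: "real \<Rightarrow> fvec \<Rightarrow> fvec" where
  "Aminus q c = (\<lambda>m. complex_of_real (q powr (real (m + 1) / 2 + 1)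
      * (1 - q powr (- real (m + 1))) / (1 - q)) * c (m + 1))"

definition Eop :: "real \<Rightarrow> real \<Rightarrow> complex \<Rightarrow> (fvec \<Rightarrow> fvec) \<Rightarrow> fvec \<Rightarrow> fvec" where
  "Eop q \<mu> s A c = (\<lambda>m. \<Sum>k. complex_of_real (q powr (\<mu> * real k ^ 2) / qpoch q q k)
      * s ^ k * (((A ^^ k) c) m))"

definition Uop :: "real \<Rightarrow> real \<Rightarrow> real \<Rightarrow> complex \<Rightarrow> complex \<Rightarrow> fvec \<Rightarrow> fvec" where
  "Uop q \<mu> \<nu> \<alpha> \<beta> c =
     Eop q \<mu> (complex_of_real (1 - q) * \<alpha>) (Aplus q)
       (Eop q \<nu> (\<beta> / complex_of_real q * complex_of_real (1 - q)) (Aminus q) c)"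

end

theory Submission
  imports Defs
begin

lemma qpoch_Suc: "qpoch a q (Suc k) = qpoch a q k * (1 - a * q ^ k)"
  by (simp add: qpoch_def)

lemma qpoch_pos: "0 < q \<Longrightarrow> q < 1 \<Longrightarrow> qpoch q q k > 0"
proof (induction k)
  case 0 then show ?case by (simp add: qpoch_def)
next
  case (Suc k)
  have "q * q ^ k < 1" using Suc.prems
    by (metis power_Suc power_less_one_iff less_numeral_extra(1) not_less_zero zero_less_Suc less_imp_le power_strict_decreasing_iff zero_less_one order_less_le_trans Suc_neq_Zero) 
  then show ?case using Suc by (simp add: qpoch_Suc)
qed

lemma Aminus_app: "Aminus q c m = complex_of_real (q powr (real (m + 1) / 2 + 1)
      * (1 - q powr (- real (m + 1))) / (1 - q)) * c (m + 1)"
  by (simp add: Aminus_def)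

lemma Aplus_app: "Aplus q c m = (if m = 0 then 0
      else - complex_of_real (q powr (- real m / 2)) * c (m - 1))"
  by (simp add: Aplus_def)

lemma Am_pow: "(Aminus q ^^ k) (xi n) j =
   (if j + k = n then complex_of_real (\<Prod>i<k. q powr (real (n - i) / 2 + 1)
      * (1 - q powr (- real (n - i))) / (1 - q)) else 0)"
proof (induction k arbitrary: j)
  case 0 then show ?case by (simp add: xi_def)
next
  case (Suc k)
  have s: "(Aminus q ^^ Suc k) (xi n) j = Aminus q ((Aminus q ^^ k) (xi n)) j" by simp
  show ?case
  proof (cases "j + Suc k = n")
    case True
    then have e: "n - k = j + 1" by simp
    have rn: "real n = real j + real k + 1" using True by simp
    show ?thesis using True unfolding s Aminus_app[of q "(Aminus q ^^ k) (xi n)" j] Suc prod.lessThan_Suc e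
      by (simp add: mult_ac)
  next
    case False
    then show ?thesis unfolding s Aminus_app[of q "(Aminus q ^^ k) (xi n)" j] Suc by simp
  qed
qed

lemma Ap_pow: assumes q: "0 < q" shows "(Aplus q ^^ l) c m =
   (if l \<le> m then complex_of_real ((-1)^l * q powr (- (real l * real m) / 2 + real l * (real l - 1) / 4)) * c (m - l) else 0)"
proof (induction l arbitrary: m)
  case 0 then show ?case using q by simp
next
  case (Suc l)
  have s: "(Aplus q ^^ Suc l) c m = Aplus q ((Aplus q ^^ l) c) m" by simp
  show ?case
  proof (cases "Suc l \<le> m")
    case True
    then obtain p where p: "m = Suc p" by (cases m) auto
    have ex0: "q powr (- real m / 2) * q powr (- (real l * real p) / 2 + real l * (real l - 1) / 4)
       = q powr (- (real (Suc l) * real m) / 2 + real (Suc l) * (real (Suc l) - 1) / 4)"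
      unfolding powr_add[symmetric] by (rule arg_cong[where f="\<lambda>x. q powr x"]) (simp add: p field_simps)
    have ex: "- (q powr (- real m / 2)) * ((-1)^l * q powr (- (real l * real p) / 2 + real l * (real l - 1) / 4))
       = (-1)^Suc l * q powr (- (real (Suc l) * real m) / 2 + real (Suc l) * (real (Suc l) - 1) / 4)"
      using ex0 by (simp add: mult_ac)
    have "(Aplus q ^^ Suc l) c m = - complex_of_real (q powr (- real m / 2)) * (Aplus q ^^ l) c p"
      unfolding s Aplus_app[of q "(Aplus q ^^ l) c" m] by (simp add: p)
    also have "\<dots> = - complex_of_real (q powr (- real m / 2)) * (complex_of_real ((-1)^l * q powr (- (real l * real p) / 2 + real l * (real l - 1) / 4)) * c (p - l))"
      using True p by (simp add: Suc)
    also have "\<dots> = complex_of_real ((-1)^Suc l * q powr (- (real (Suc l) * real m) / 2 + real (Suc l) * (real (Suc l) - 1) / 4)) * c (m - Suc l)"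
      unfolding ex[symmetric] using True p by simp
    finally show ?thesis using True by simp
  next
    case False
    then show ?thesis unfolding s Aplus_app[of q "(Aplus q ^^ l) c" m] by (cases m) (simp_all add: Suc)
  qed
qed

lemma aux: "(c::real) * d = 1 \<Longrightarrow> 1 - c = - c * (1 - d)" by (simp add: algebra_simps)

lemma alg1: "w \<noteq> 0 \<Longrightarrow> (u::real) \<noteq> 0 \<Longrightarrow> s * X * N / (P * w) / D * (- Y * w / u) = (- s) * (X * Y) * N / P / (D * u)"
  by (simp add: field_simps)

lemma qpoch_0[simp]: "qpoch a q 0 = 1" by (simp add: qpoch_def)

lemma qshift: "qpoch (q ^ (g + 1)) q k * qpoch q q g = qpoch q q (g + k)"
  by (induction k) (simp_all add: qpoch_Suc power_add mult_ac)

lemma fac_lem: assumes q: "0 < q"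
  shows "q powr (real p / 2 + 1) * (1 - q powr (- real p)) = - (q powr (1 - real p / 2)) * (1 - q ^ p)"
proof -
  have a: "q powr (real p / 2 + 1) * q powr (- real p) = q powr (1 - real p / 2)"
    by (simp add: powr_add[symmetric] algebra_simps)
  have b: "q powr (1 - real p / 2) * q ^ p = q powr (real p / 2 + 1)"
    using q by (simp add: powr_realpow[symmetric] powr_add[symmetric] algebra_simps)
  have "q powr (real p / 2 + 1) * (1 - q powr (- real p)) = q powr (real p / 2 + 1) - q powr (1 - real p / 2)"
    unfolding right_diff_distrib mult_1_right a ..
  also have "\<dots> = - (q powr (1 - real p / 2)) * (1 - q ^ p)"
    unfolding right_diff_distrib mult_1_right mult_minus_left b by simp
  finally show ?thesis .
qed

lemma amc: assumes q: "0 < q" "q < 1" and "k \<le> n"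
  shows "(\<Prod>i<k. q powr (real (n - i) / 2 + 1) * (1 - q powr (- real (n - i))) / (1 - q))
    = (-1)^k * q powr (real k - real k * real n / 2 + real k * (real k - 1) / 4)
      * qpoch q q n / qpoch q q (n - k) / (1 - q)^k"
  using \<open>k \<le> n\<close>
proof (induction k)
  case 0 then show ?case using qpoch_pos[OF q, of n] q by simp
next
  case (Suc k)
  define r where "r = n - Suc k"
  have p: "n - k = Suc r" using Suc.prems r_def by simp
  have rp: "real r = real n - real k - 1" using Suc.prems r_def by simp
  have Pp: "qpoch q q (Suc r) = qpoch q q r * (1 - q ^ Suc r)" by (simp add: qpoch_Suc)
  have pos: "qpoch q q r > 0" "qpoch q q n > 0" using qpoch_pos[OF q] by auto
  have nz: "1 - q ^ Suc r \<noteq> 0" using q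
    by (metis diff_gt_0_iff_gt less_numeral_extra(3) power_less_one_iff zero_less_Suc less_imp_le)
  have ex: "q powr (real k - real k * real n / 2 + real k * (real k - 1) / 4) * q powr (1 - real (Suc r) / 2)
     = q powr (real (Suc k) - real (Suc k) * real n / 2 + real (Suc k) * (real (Suc k) - 1) / 4)"
    unfolding powr_add[symmetric] by (rule arg_cong[where f="\<lambda>x. q powr x"]) (simp add: rp field_simps)
  have "(\<Prod>i<Suc k. q powr (real (n - i) / 2 + 1) * (1 - q powr (- real (n - i))) / (1 - q))
     = (-1)^k * q powr (real k - real k * real n / 2 + real k * (real k - 1) / 4)
      * qpoch q q n / qpoch q q (Suc r) / (1 - q)^k * 
       (q powr (real (Suc r) / 2 + 1) * (1 - q powr (- real (Suc r))) / (1 - q))"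
    using Suc by (simp only: prod.lessThan_Suc p Suc_leD)
  also have "\<dots> = (-1)^k * q powr (real k - real k * real n / 2 + real k * (real k - 1) / 4)
      * qpoch q q n / qpoch q q (Suc r) / (1 - q)^k * 
       (- (q powr (1 - real (Suc r) / 2)) * (1 - q ^ Suc r) / (1 - q))"
    by (simp only: fac_lem[OF q(1)])
  also have "\<dots> = (- ((-1)^k)) * (q powr (real k - real k * real n / 2 + real k * (real k - 1) / 4) * q powr (1 - real (Suc r) / 2))
      * qpoch q q n / qpoch q q r / ((1 - q)^k * (1 - q))"
    unfolding Pp by (rule alg1[OF nz]) (use q in simp)
  also have "\<dots> = (-1)^Suc k * q powr (real (Suc k) - real (Suc k) * real n / 2 + real (Suc k) * (real (Suc k) - 1) / 4)
      * qpoch q q n / qpoch q q (n - Suc k) / (1 - q)^Suc k"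
    unfolding ex unfolding r_def by (simp add: mult_ac)
  finally show ?case .
qed

lemma qneg: assumes q: "0 < q" "q < 1" and "k \<le> n"
  shows "qpoch (q powr (- real n)) q k
    = (-1)^k * q powr (real k * (real k - 1) / 2 - real n * real k) * qpoch q q n / qpoch q q (n - k)"
  using \<open>k \<le> n\<close>
proof (induction k)
  case 0 then show ?case using qpoch_pos[OF q, of n] q by simp
next
  case (Suc k)
  define r where "r = n - Suc k"
  have p: "n - k = Suc r" using Suc.prems r_def by simp
  have rp: "real r = real n - real k - 1" using Suc.prems r_def by simp
  have Pp: "qpoch q q (Suc r) = qpoch q q r * (1 - q ^ Suc r)" by (simp add: qpoch_Suc)
  have pos: "qpoch q q r > 0" "qpoch q q n > 0" using qpoch_pos[OF q] by auto
  have nz: "1 - q ^ Suc r \<noteq> 0" using q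
    by (metis diff_gt_0_iff_gt less_numeral_extra(3) power_less_one_iff zero_less_Suc less_imp_le)
  have f: "1 - q powr (- real n) * q ^ k = - (q powr (real k - real n)) * (1 - q ^ Suc r)"
  proof -
    have a: "q powr (- real n) * q ^ k = q powr (real k - real n)"
      using q by (simp add: powr_realpow[symmetric] powr_add[symmetric] algebra_simps)
    have b: "q powr (real k - real n) * q ^ Suc r = 1"
      using q by (simp add: powr_realpow[symmetric] powr_add[symmetric] rp algebra_simps)
    show ?thesis unfolding a using aux[OF b] by simp
  qed
  have ex: "q powr (real k * (real k - 1) / 2 - real n * real k) * q powr (real k - real n)
     = q powr (real (Suc k) * (real (Suc k) - 1) / 2 - real n * real (Suc k))"
    unfolding powr_add[symmetric] by (rule arg_cong[where f="\<lambda>x. q powr x"]) (simp add: field_simps)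
  have "qpoch (q powr (- real n)) q (Suc k) = (-1)^k * q powr (real k * (real k - 1) / 2 - real n * real k) * qpoch q q n / qpoch q q (Suc r)
     * (- (q powr (real k - real n)) * (1 - q ^ Suc r))"
    using Suc by (simp add: qpoch_Suc p f)
  also have "\<dots> = (-1)^Suc k * (q powr (real k * (real k - 1) / 2 - real n * real k) * q powr (real k - real n)) * qpoch q q n / qpoch q q r"
    unfolding Pp using pos nz by (simp add: field_simps)
  also have "\<dots> = (-1)^Suc k * q powr (real (Suc k) * (real (Suc k) - 1) / 2 - real n * real (Suc k)) * qpoch q q n / qpoch q q (n - Suc k)"
    unfolding ex unfolding r_def ..
  finally show ?case .
qed

definition Ncoef :: "real \<Rightarrow> real \<Rightarrow> real \<Rightarrow> nat \<Rightarrow> nat \<Rightarrow> nat \<Rightarrow> nat \<Rightarrow> real" where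
  "Ncoef q \<mu> \<nu> m n l k = (-1)^(l+k) * (1-q)^l *
     q powr (\<mu> * real l ^ 2 + \<nu> * real k ^ 2 - real l * real m / 2 + real l * (real l - 1) / 4
             - real k * real n / 2 + real k * (real k - 1) / 4)
     * (qpoch q q n / (qpoch q q l * qpoch q q k * qpoch q q (n - k)))"

lemma alg2: "(Q::real) \<noteq> 0 \<Longrightarrow> Pl \<noteq> 0 \<Longrightarrow> Pk \<noteq> 0 \<Longrightarrow> Pnk \<noteq> 0 \<Longrightarrow> u \<noteq> 0 \<Longrightarrow>
  A / Pl * u^l * (sl * B * (C / Pk * (u^k / Q) * (sk * D * Pn / Pnk / u^k)))
   = (sl * sk) * u^l * ((A * B * C * D) / Q) * (Pn / (Pl * Pk * Pnk))"
  by (simp add: field_simps)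

lemma term_norm:
  assumes q: "0 < q" "q < 1" and kn: "k \<le> n"
  shows "complex_of_real (q powr (\<mu> * real l ^ 2) / qpoch q q l) * (complex_of_real (1 - q) * \<alpha>) ^ l *
     (complex_of_real ((-1)^l * q powr (- (real l * real m) / 2 + real l * (real l - 1) / 4)) *
      (complex_of_real (q powr (\<nu> * real k ^ 2) / qpoch q q k) * (\<beta> / complex_of_real q * complex_of_real (1 - q)) ^ k *
       complex_of_real ((-1)^k * q powr (real k - real k * real n / 2 + real k * (real k - 1) / 4)
        * qpoch q q n / qpoch q q (n - k) / (1 - q)^k)))
   = complex_of_real (Ncoef q \<mu> \<nu> m n l k) * \<alpha> ^ l * \<beta> ^ k"
proof -
  define R where "R = q powr (\<mu> * real l ^ 2) / qpoch q q l * (1 - q) ^ l *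
     (((-1)^l * q powr (- (real l * real m) / 2 + real l * (real l - 1) / 4)) *
      (q powr (\<nu> * real k ^ 2) / qpoch q q k * ((1 - q)^k / q^k) *
       ((-1)^k * q powr (real k - real k * real n / 2 + real k * (real k - 1) / 4)
        * qpoch q q n / qpoch q q (n - k) / (1 - q)^k)))"
  have c1: "(complex_of_real (1 - q) * \<alpha>) ^ l = complex_of_real ((1 - q)^l) * \<alpha>^l"
    by (simp add: power_mult_distrib)
  have c2: "(\<beta> / complex_of_real q * complex_of_real (1 - q)) ^ k = complex_of_real ((1 - q)^k / q^k) * \<beta>^k"
    by (simp add: power_mult_distrib power_divide mult_ac)
  have L: "?thesis \<longleftrightarrow> complex_of_real R * \<alpha> ^ l * \<beta> ^ k = complex_of_real (Ncoef q \<mu> \<nu> m n l k) * \<alpha> ^ l * \<beta> ^ k"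
    unfolding c1 c2 R_def of_real_mult by (simp only: mult_ac)
  have pos: "qpoch q q l > 0" "qpoch q q k > 0" "qpoch q q (n - k) > 0" using qpoch_pos[OF q] by auto
  have pw: "q powr (\<mu> * real l ^ 2) * q powr (- (real l * real m) / 2 + real l * (real l - 1) / 4)
     * q powr (\<nu> * real k ^ 2) * q powr (real k - real k * real n / 2 + real k * (real k - 1) / 4)
     = q powr (\<mu> * real l ^ 2 + \<nu> * real k ^ 2 - real l * real m / 2 + real l * (real l - 1) / 4
             - real k * real n / 2 + real k * (real k - 1) / 4) * q ^ k"
    using q unfolding powr_realpow[symmetric, OF q(1)] powr_add[symmetric]
    by (intro arg_cong[where f="\<lambda>x. q powr x"]) (simp add: field_simps)
  have "R = ((-1)^l * (-1)^k) * (1 - q)^l * ((q powr (\<mu> * real l ^ 2) * q powr (- (real l * real m) / 2 + real l * (real l - 1) / 4)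
     * q powr (\<nu> * real k ^ 2) * q powr (real k - real k * real n / 2 + real k * (real k - 1) / 4)) / q^k)
     * (qpoch q q n / (qpoch q q l * qpoch q q k * qpoch q q (n - k)))"
    unfolding R_def by (rule alg2) (use q pos in auto)
  also have "\<dots> = Ncoef q \<mu> \<nu> m n l k"
    unfolding pw Ncoef_def using q by (simp add: power_add)
  finally show ?thesis unfolding L by simp
qed

lemma cx1: "(- b) ^ d * complex_of_real X * (complex_of_real Y * (- complex_of_real u * a * b) ^ l)
   = complex_of_real ((-1)^d * (-1)^l * u^l * X * Y) * a ^ l * b ^ (d + l)"
proof -
  have "(- complex_of_real u * a * b) ^ l = (-1)^l * complex_of_real u ^ l * a^l * b^l"
    by (simp only: power_mult_distrib power_minus[of "complex_of_real u"])
  moreover have "(- b) ^ d = (-1)^d * b^d" by (rule power_minus)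
  ultimately show ?thesis by (simp add: power_add mult_ac)
qed

lemma alg3: "(Pm::real) \<noteq> 0 \<Longrightarrow> Pd \<noteq> 0 \<Longrightarrow> Pml \<noteq> 0 \<Longrightarrow> Pl \<noteq> 0 \<Longrightarrow> Pdl \<noteq> 0 \<Longrightarrow>
  sd * sl * u * (X1 * (Pn / (Pm * Pd))) * (X2 * (sl' * X3 * Pm / Pml) / (Pl * (Pdl / Pd)))
  = (sd * sl * sl') * u * (X1 * X2 * X3) * (Pn / (Pl * Pdl * Pml))"
  by (simp add: field_simps)

lemma case1:
  assumes q: "0 < q" "q < 1" and mn: "m \<le> n" and lm: "l \<le> m"
  shows "(- \<beta>) ^ (n - m) * complex_of_real (q powr (real (n - m) * ((\<nu> + 1/4) * real (n - m) - real n / 2 - 1/4)) * qbinom q n m)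
     * (complex_of_real (q powr (real l ^ 2 * (\<mu> + \<nu>) + 2 * \<nu> * real (n - m) * real l)
          * qpoch (q powr (- real m)) q l / (qpoch q q l * qpoch (q ^ (n - m + 1)) q l))
        * (- complex_of_real (1 - q) * \<alpha> * \<beta>) ^ l)
   = complex_of_real (Ncoef q \<mu> \<nu> m n l (n - m + l)) * \<alpha> ^ l * \<beta> ^ (n - m + l)"
proof -
  obtain d where hn: "n = m + d" using mn le_Suc_ex by blast
  have pos: "\<And>j. qpoch q q j > 0" using qpoch_pos[OF q] by auto
  have nz: "\<And>j. qpoch q q j \<noteq> 0" using pos by (metis less_irrefl)
  have sh: "qpoch (q ^ (d + 1)) q l = qpoch q q (d + l) / qpoch q q d"
    using qshift[of q d l] pos[of d] by (simp add: field_simps)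
  have ml: "m + d - (d + l) = m - l" by simp
  have pw: "q powr (real d * ((\<nu> + 1/4) * real d - (real m + real d) / 2 - 1/4))
     * q powr (real l ^ 2 * (\<mu> + \<nu>) + 2 * \<nu> * real d * real l)
     * q powr (real l * (real l - 1) / 2 - real m * real l)
     = q powr (\<mu> * real l ^ 2 + \<nu> * real (d + l) ^ 2 - real l * real m / 2 + real l * (real l - 1) / 4
             - real (d + l) * real (m + d) / 2 + real (d + l) * (real (d + l) - 1) / 4)"
    unfolding powr_add[symmetric]
    by (intro arg_cong[where f="\<lambda>x. q powr x"]) (simp add: field_simps power2_eq_square)
  have "(-1::real)^d * (-1)^l * (1 - q)^l * (q powr (real d * ((\<nu> + 1/4) * real d - (real m + real d) / 2 - 1/4))
          * (qpoch q q (m + d) / (qpoch q q m * qpoch q q d)))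
        * (q powr (real l ^ 2 * (\<mu> + \<nu>) + 2 * \<nu> * real d * real l)
          * ((-1)^l * q powr (real l * (real l - 1) / 2 - real m * real l) * qpoch q q m / qpoch q q (m - l))
          / (qpoch q q l * (qpoch q q (d + l) / qpoch q q d)))
     = ((-1)^d * (-1)^l * (-1)^l) * (1 - q)^l * (q powr (real d * ((\<nu> + 1/4) * real d - (real m + real d) / 2 - 1/4))
     * q powr (real l ^ 2 * (\<mu> + \<nu>) + 2 * \<nu> * real d * real l)
     * q powr (real l * (real l - 1) / 2 - real m * real l))
       * (qpoch q q (m + d) / (qpoch q q l * qpoch q q (d + l) * qpoch q q (m - l)))"
    by (rule alg3) (simp_all add: nz)
  also have "\<dots> = Ncoef q \<mu> \<nu> m (m + d) l (d + l)"
    unfolding pw Ncoef_def ml by (simp add: power_add)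
  finally have R: "(-1::real)^d * (-1)^l * (1 - q)^l * (q powr (real d * ((\<nu> + 1/4) * real d - (real m + real d) / 2 - 1/4))
          * (qpoch q q (m + d) / (qpoch q q m * qpoch q q d)))
        * (q powr (real l ^ 2 * (\<mu> + \<nu>) + 2 * \<nu> * real d * real l)
          * ((-1)^l * q powr (real l * (real l - 1) / 2 - real m * real l) * qpoch q q m / qpoch q q (m - l))
          / (qpoch q q l * (qpoch q q (d + l) / qpoch q q d))) = Ncoef q \<mu> \<nu> m (m + d) l (d + l)" .
  show ?thesis
    unfolding hn
    apply (simp only: add_diff_cancel_left' cx1 qbinom_def qneg[OF q lm] sh of_nat_add)
    apply (simp only: R[symmetric] diff_add_cancel)
    done
qed

lemma cx2: "(- complex_of_real u * a) ^ e / complex_of_real P * complex_of_real X * (complex_of_real Y * (- complex_of_real u * a * b) ^ k)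
   = complex_of_real ((-1)^e * (-1)^k * u^e * u^k / P * X * Y) * a ^ (e + k) * b ^ k"
proof -
  have "(- complex_of_real u * a * b) ^ k = (-1)^k * complex_of_real u ^ k * a^k * b^k"
    by (simp only: power_mult_distrib power_minus[of "complex_of_real u"])
  moreover have "(- complex_of_real u * a) ^ e = (-1)^e * complex_of_real u ^ e * a^e"
    by (simp only: power_mult_distrib power_minus[of "complex_of_real u"])
  ultimately show ?thesis by (simp add: power_add mult_ac)
qed

lemma alg4: "(Pe::real) \<noteq> 0 \<Longrightarrow> Pnk \<noteq> 0 \<Longrightarrow> Pk \<noteq> 0 \<Longrightarrow> Pek \<noteq> 0 \<Longrightarrow>
  se * sk * u^e * u^k / Pe * X1 * (X2 * (sk' * X3 * Pn / Pnk) / (Pk * (Pek / Pe)))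
  = (se * sk * sk') * u^(e + k) * (X1 * X2 * X3) * (Pn / (Pek * Pk * Pnk))"
  by (simp add: field_simps power_add)

lemma case2:
  assumes q: "0 < q" "q < 1" and nm: "n \<le> m" and kn: "k \<le> n"
  shows "(- complex_of_real (1 - q) * \<alpha>) ^ (m - n) / complex_of_real (qpoch q q (m - n))
     * complex_of_real (q powr (real (m - n) * ((\<mu> - 1/4) * real (m - n) - real n / 2 - 1/4)))
     * (complex_of_real (q powr (real k ^ 2 * (\<nu> + \<mu>) + 2 * \<mu> * real (m - n) * real k)
          * qpoch (q powr (- real n)) q k / (qpoch q q k * qpoch (q ^ (m - n + 1)) q k))
        * (- complex_of_real (1 - q) * \<alpha> * \<beta>) ^ k)
   = complex_of_real (Ncoef q \<mu> \<nu> m n (m - n + k) k) * \<alpha> ^ (m - n + k) * \<beta> ^ k"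
proof -
  obtain e where hm: "m = n + e" using nm le_Suc_ex by blast
  have pos: "\<And>j. qpoch q q j > 0" using qpoch_pos[OF q] by auto
  have nz: "\<And>j. qpoch q q j \<noteq> 0" using pos by (metis less_irrefl)
  have sh: "qpoch (q ^ (e + 1)) q k = qpoch q q (e + k) / qpoch q q e"
    using qshift[of q e k] pos[of e] by (simp add: field_simps)
  have pw: "q powr (real e * ((\<mu> - 1/4) * real e - real n / 2 - 1/4))
     * q powr (real k ^ 2 * (\<nu> + \<mu>) + 2 * \<mu> * real e * real k)
     * q powr (real k * (real k - 1) / 2 - real n * real k)
     = q powr (\<mu> * real (e + k) ^ 2 + \<nu> * real k ^ 2 - real (e + k) * real (n + e) / 2 + real (e + k) * (real (e + k) - 1) / 4
             - real k * real n / 2 + real k * (real k - 1) / 4)"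
    unfolding powr_add[symmetric]
    by (intro arg_cong[where f="\<lambda>x. q powr x"]) (simp add: field_simps power2_eq_square)
  have "(-1::real)^e * (-1)^k * (1 - q)^e * (1 - q)^k / qpoch q q e
          * q powr (real e * ((\<mu> - 1/4) * real e - real n / 2 - 1/4))
        * (q powr (real k ^ 2 * (\<nu> + \<mu>) + 2 * \<mu> * real e * real k)
          * ((-1)^k * q powr (real k * (real k - 1) / 2 - real n * real k) * qpoch q q n / qpoch q q (n - k))
          / (qpoch q q k * (qpoch q q (e + k) / qpoch q q e)))
     = ((-1)^e * (-1)^k * (-1)^k) * (1 - q)^(e + k) * (q powr (real e * ((\<mu> - 1/4) * real e - real n / 2 - 1/4))
     * q powr (real k ^ 2 * (\<nu> + \<mu>) + 2 * \<mu> * real e * real k)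
     * q powr (real k * (real k - 1) / 2 - real n * real k))
       * (qpoch q q n / (qpoch q q (e + k) * qpoch q q k * qpoch q q (n - k)))"
    by (rule alg4) (simp_all add: nz)
  also have "\<dots> = Ncoef q \<mu> \<nu> (n + e) n (e + k) k"
    unfolding pw Ncoef_def by (simp add: power_add)
  finally have R: "(-1::real)^e * (-1)^k * (1 - q)^e * (1 - q)^k / qpoch q q e
          * q powr (real e * ((\<mu> - 1/4) * real e - real n / 2 - 1/4))
        * (q powr (real k ^ 2 * (\<nu> + \<mu>) + 2 * \<mu> * real e * real k)
          * ((-1)^k * q powr (real k * (real k - 1) / 2 - real n * real k) * qpoch q q n / qpoch q q (n - k))
          / (qpoch q q k * (qpoch q q (e + k) / qpoch q q e))) = Ncoef q \<mu> \<nu> (n + e) n (e + k) k" .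
  show ?thesis
    unfolding hm
    apply (simp only: add_diff_cancel_left' cx2 qneg[OF q kn] sh)
    apply (simp only: R[symmetric])
    done
qed

lemma inner:
  assumes q: "0 < q" "q < 1"
  shows "Eop q \<nu> s (Aminus q) (xi n) = (\<lambda>j. if j \<le> n then
     complex_of_real (q powr (\<nu> * real (n - j) ^ 2) / qpoch q q (n - j)) * s ^ (n - j) *
       complex_of_real ((-1)^(n - j) * q powr (real (n - j) - real (n - j) * real n / 2 + real (n - j) * (real (n - j) - 1) / 4)
        * qpoch q q n / qpoch q q (n - (n - j)) / (1 - q)^(n - j)) else 0)"
proof
  fix j
  let ?g = "\<lambda>k. complex_of_real (q powr (\<nu> * real k ^ 2) / qpoch q q k) * s ^ k *
      complex_of_real (\<Prod>i<k. q powr (real (n - i) / 2 + 1) * (1 - q powr (- real (n - i))) / (1 - q))"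
  show "Eop q \<nu> s (Aminus q) (xi n) j = (if j \<le> n then
     complex_of_real (q powr (\<nu> * real (n - j) ^ 2) / qpoch q q (n - j)) * s ^ (n - j) *
       complex_of_real ((-1)^(n - j) * q powr (real (n - j) - real (n - j) * real n / 2 + real (n - j) * (real (n - j) - 1) / 4)
        * qpoch q q n / qpoch q q (n - (n - j)) / (1 - q)^(n - j)) else 0)"
  proof (cases "j \<le> n")
    case True
    have f: "(\<lambda>k. complex_of_real (q powr (\<nu> * real k ^ 2) / qpoch q q k) * s ^ k * (Aminus q ^^ k) (xi n) j)
       = (\<lambda>k. if k = n - j then ?g k else 0)"
      using True by (intro ext) (auto simp: Am_pow)
    have "Eop q \<nu> s (Aminus q) (xi n) j = ?g (n - j)"
      unfolding Eop_def f by (rule sums_unique[symmetric]) (rule sums_single)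
    also have "\<dots> = complex_of_real (q powr (\<nu> * real (n - j) ^ 2) / qpoch q q (n - j)) * s ^ (n - j) *
       complex_of_real ((-1)^(n - j) * q powr (real (n - j) - real (n - j) * real n / 2 + real (n - j) * (real (n - j) - 1) / 4)
        * qpoch q q n / qpoch q q (n - (n - j)) / (1 - q)^(n - j))"
      by (simp only: amc[OF q diff_le_self])
    finally show ?thesis using True by simp
  next
    case False
    have f: "(\<lambda>k. complex_of_real (q powr (\<nu> * real k ^ 2) / qpoch q q k) * s ^ k * (Aminus q ^^ k) (xi n) j)
       = (\<lambda>k. 0)"
      using False by (intro ext) (auto simp: Am_pow)
    show ?thesis unfolding Eop_def f using False by simp
  qed
qed

theorem mainTheorem1:
  fixes q \<mu> \<nu> :: real and \<alpha> \<beta> :: complex and m n :: nat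
  assumes "0 < q" and "q < 1"
  shows "(m \<le> n \<longrightarrow> Uop q \<mu> \<nu> \<alpha> \<beta> (xi n) m =
           (- \<beta>) ^ (n - m)
           * complex_of_real (q powr (real (n - m) * ((\<nu> + 1/4) * real (n - m) - real n / 2 - 1/4))
                               * qbinom q n m)
           * Pcal q \<mu> \<nu> m (n - m) (- complex_of_real (1 - q) * \<alpha> * \<beta>))
    \<and> (n \<le> m \<longrightarrow> Uop q \<mu> \<nu> \<alpha> \<beta> (xi n) m =
           (- complex_of_real (1 - q) * \<alpha>) ^ (m - n) / complex_of_real (qpoch q q (m - n))
           * complex_of_real (q powr (real (m - n) * ((\<mu> - 1/4) * real (m - n) - real n / 2 - 1/4)))
           * Pcal q \<nu> \<mu> n (m - n) (- complex_of_real (1 - q) * \<alpha> * \<beta>))"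
proof -
  have q: "0 < q" "q < 1" using assms by auto
  let ?s1 = "complex_of_real (1 - q) * \<alpha>"
  let ?s2 = "\<beta> / complex_of_real q * complex_of_real (1 - q)"
  define W where "W = Eop q \<nu> ?s2 (Aminus q) (xi n)"
  note Wd = inner[OF q, of \<nu> ?s2 n, folded W_def]
  let ?c = "\<lambda>l. complex_of_real (q powr (\<mu> * real l ^ 2) / qpoch q q l)"
  let ?T = "\<lambda>l. ?c l * ?s1^l * (complex_of_real ((-1)^l * q powr (- (real l * real m) / 2 + real l * (real l - 1) / 4)) * W (m - l))"
  have U: "Uop q \<mu> \<nu> \<alpha> \<beta> (xi n) m = (\<Sum>l\<le>m. ?T l)"
  proof -
    have "Uop q \<mu> \<nu> \<alpha> \<beta> (xi n) m = (\<Sum>l. ?c l * ?s1^l * (Aplus q ^^ l) W m)"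
      unfolding Uop_def W_def[symmetric] Eop_def[of q \<mu>] ..
    also have "\<dots> = (\<Sum>l\<le>m. ?c l * ?s1^l * (Aplus q ^^ l) W m)"
      by (rule suminf_finite) (auto simp: Ap_pow[OF q(1)])
    also have "\<dots> = (\<Sum>l\<le>m. ?T l)"
      by (rule sum.cong) (auto simp: Ap_pow[OF q(1)])
    finally show ?thesis .
  qed
  show ?thesis
  proof (intro conjI impI)
    assume mn: "m \<le> n"
    have "(\<Sum>l\<le>m. ?T l) = (\<Sum>l\<le>m. complex_of_real (Ncoef q \<mu> \<nu> m n l (n - m + l)) * \<alpha> ^ l * \<beta> ^ (n - m + l))"
    proof (rule sum.cong)
      fix l assume "l \<in> {..m}"
      then have lm: "l \<le> m" by simp
      have e: "n - (m - l) = n - m + l" using lm mn by simp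
      have c: "(m - l \<le> n) = True" using mn by simp
      have Wl: "W (m - l) = complex_of_real (q powr (\<nu> * real (n - m + l) ^ 2) / qpoch q q (n - m + l)) * ?s2 ^ (n - m + l) *
       complex_of_real ((-1)^(n - m + l) * q powr (real (n - m + l) - real (n - m + l) * real n / 2 + real (n - m + l) * (real (n - m + l) - 1) / 4)
        * qpoch q q n / qpoch q q (n - (n - m + l)) / (1 - q)^(n - m + l))"
        unfolding Wd by (simp only: c if_True e)
      show "?T l = complex_of_real (Ncoef q \<mu> \<nu> m n l (n - m + l)) * \<alpha> ^ l * \<beta> ^ (n - m + l)"
        unfolding Wl by (rule term_norm[OF q]) (use lm mn in simp)
    qed simp
    also have "\<dots> = (- \<beta>) ^ (n - m)
           * complex_of_real (q powr (real (n - m) * ((\<nu> + 1/4) * real (n - m) - real n / 2 - 1/4))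
                               * qbinom q n m)
           * Pcal q \<mu> \<nu> m (n - m) (- complex_of_real (1 - q) * \<alpha> * \<beta>)"
      unfolding Pcal_def sum_distrib_left atLeast0AtMost
      by (rule sum.cong[OF refl], rule case1[OF q mn, symmetric]) simp
    finally show "Uop q \<mu> \<nu> \<alpha> \<beta> (xi n) m = (- \<beta>) ^ (n - m)
           * complex_of_real (q powr (real (n - m) * ((\<nu> + 1/4) * real (n - m) - real n / 2 - 1/4))
                               * qbinom q n m)
           * Pcal q \<mu> \<nu> m (n - m) (- complex_of_real (1 - q) * \<alpha> * \<beta>)" using U by simp
  next
    assume nm: "n \<le> m"
    obtain e where hm: "m = n + e" using nm le_Suc_ex by blast
    have "(\<Sum>l\<le>m. ?T l) = (\<Sum>l\<in>{e..m}. ?T l)"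
    proof (rule sum.mono_neutral_right)
      show "\<forall>l\<in>{..m} - {e..m}. ?T l = 0"
      proof
        fix l assume "l \<in> {..m} - {e..m}"
        then have nl: "\<not> (m - l \<le> n)" using hm by auto
        have "W (m - l) = 0" unfolding Wd using nl by (simp only: if_False)
        then show "?T l = 0" by simp
      qed
    qed auto
    also have "\<dots> = (\<Sum>k=0..n. ?T (k + e))"
      using sum.shift_bounds_cl_nat_ivl[of ?T 0 e n] hm by (simp add: add.commute)
    also have "\<dots> = (\<Sum>k=0..n. complex_of_real (Ncoef q \<mu> \<nu> m n (m - n + k) k) * \<alpha> ^ (m - n + k) * \<beta> ^ k)"
    proof (rule sum.cong)
      fix k assume "k \<in> {0..n}"
      then have kn: "k \<le> n" by simp
      have mk: "m - (k + e) = n - k" using hm by simp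
      have nk: "n - (n - k) = k" using kn by simp
      have c: "(n - k \<le> n) = True" by simp
      have ee: "m - n + k = k + e" using hm by simp
      have Wl: "W (m - (k + e)) = complex_of_real (q powr (\<nu> * real k ^ 2) / qpoch q q k) * ?s2 ^ k *
       complex_of_real ((-1)^k * q powr (real k - real k * real n / 2 + real k * (real k - 1) / 4)
        * qpoch q q n / qpoch q q (n - k) / (1 - q)^k)"
        unfolding Wd mk by (simp only: c if_True nk)
      show "?T (k + e) = complex_of_real (Ncoef q \<mu> \<nu> m n (m - n + k) k) * \<alpha> ^ (m - n + k) * \<beta> ^ k"
        unfolding ee Wl by (rule term_norm[OF q kn])
    qed simp
    also have "\<dots> = (- complex_of_real (1 - q) * \<alpha>) ^ (m - n) / complex_of_real (qpoch q q (m - n))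
           * complex_of_real (q powr (real (m - n) * ((\<mu> - 1/4) * real (m - n) - real n / 2 - 1/4)))
           * Pcal q \<nu> \<mu> n (m - n) (- complex_of_real (1 - q) * \<alpha> * \<beta>)"
      unfolding Pcal_def sum_distrib_left
      by (rule sum.cong[OF refl], rule case2[OF q nm, symmetric]) simp
    finally show "Uop q \<mu> \<nu> \<alpha> \<beta> (xi n) m = (- complex_of_real (1 - q) * \<alpha>) ^ (m - n) / complex_of_real (qpoch q q (m - n))
           * complex_of_real (q powr (real (m - n) * ((\<mu> - 1/4) * real (m - n) - real n / 2 - 1/4)))
           * Pcal q \<nu> \<mu> n (m - n) (- complex_of_real (1 - q) * \<alpha> * \<beta>)" using U by simp
  qed
qed

end
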